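(* Let $\mathfrak{R}$ be either $\mathbb{F}_q$ ($q$ a prime power) or $\mathbb{Z}_k$ ($k\ge2$), with elements listed as $0=\omega_0,\omega_1,\dots,\omega_{|\mathfrak{R}|-1}$. Let $C$ be an $\mathfrak{R}$-linear code of length $n$ and $\bm{w}\in\mathfrak{R}^n$. Then \[ Jac^{av}(C,\bm{w}; x_{a} : a \in \mathfrak{R}^{2}) =\sum_{L,R} A_{L}^{C}\, \frac{\prod_{b\in\mathfrak{R}}\binom{\ell_b(\bm{w})}{R_{(\omega_0,b)},\ldots,R_{(\omega_{|\mathfrak{R}|-1},b)}}}{\binom{n}{L_{\omega_0},\ldots,L_{\omega_{|\mathfrak{R}|-1}}}} \prod_{a\in\mathfrak{R}^2}x_a^{R_a}, \] where the sum runs over all compositions $L$ of $n$ and all Jacobi compositions $R$ of $n$ satisfying $L_c=\sum_{b\in\mathfrak{R}}R_{(c,b)}$ for every $c\in\mathfrak{R}$ and $\ell_c(\bm{w})=\sum_{b\in\mathfrak{R}}R_{(b,c)}$ for every $c\in\mathfrak{R}$.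
   Context: An $\mathbb{F}_q$-linear code of length $n$ is a subspace of $\mathbb{F}_q^n$; a $\mathbb{Z}_k$-linear code is an additive subgroup of $\mathbb{Z}_k^n$. For $\bm{u}\in\mathfrak{R}^n$ and $a\in\mathfrak{R}$, $\ell_a(\bm{u})$ is the number of coordinates of $\bm{u}$ equal to $a$. A composition of $n$ is a vector $L=(L_a:a\in\mathfrak{R})$ of non-negative integers with $\sum_a L_a=n$; a Jacobi composition of $n$ is a vector $R=(R_a:a\in\mathfrak{R}^2)$ of non-negative integers with $\sum_a R_a=n$. $A_L^C=\#\{\bm{u}\in C : \ell_a(\bm{u})=L_a \ \forall a\in\mathfrak{R}\}$. For $a\in\mathfrak{R}^2$, $r_a(\bm{u};\bm{w})=\#\{i:(u_i,w_i)=a\}$, and $Jac(C,\bm{w};x_a:a\in\mathfrak{R}^2)=\sum_{\bm{u}\in C}\prod_{a\in\mathfrak{R}^2}x_a^{r_a(\bm{u};\bm{w})}$. For $\sigma\in S_n$, $\bm{u}^\sigma=(u_{\sigma(1)},\dots,u_{\sigma(n)})$ and $C^\sigma=\{\bm{u}^\sigma:\bm{u}\in C\}$; $Jac^{av}(C,\bm{w};x_a:a\in\mathfrak{R}^2)=\frac{1}{n!}\sum_{\sigma\in S_n}Jac(C^\sigma,\bm{w};x_a:a\in\mathfrak{R}^2)$. Multinomial coefficients: $\binom{m}{m_1,\dots,m_k}=\frac{m!}{m_1!\cdots m_k!}$. *)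

theory Defs
  imports Complex_Main "HOL-Combinatorics.Permutations"
begin

text \<open>Words of length n over a finite ring 'r are lists of length n; coordinates are 0-indexed.\<close>

definition linear_code :: "nat \<Rightarrow> ('r::comm_ring_1) list set \<Rightarrow> bool" where
  "linear_code n C \<longleftrightarrow> C \<subseteq> {u. length u = n} \<and> replicate n 0 \<in> C \<and>
     (\<forall>u\<in>C. \<forall>v\<in>C. map2 (+) u v \<in> C) \<and> (\<forall>c. \<forall>u\<in>C. map ((*) c) u \<in> C)"

definition ell :: "'a \<Rightarrow> 'a list \<Rightarrow> nat" where
  "ell a u = card {i. i < length u \<and> u ! i = a}"

definition rcount :: "'a \<times> 'a \<Rightarrow> 'a list \<Rightarrow> 'a list \<Rightarrow> nat" where
  "rcount a u w = card {i. i < length u \<and> i < length w \<and> (u ! i, w ! i) = a}"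

definition compositions :: "nat \<Rightarrow> ('r::finite \<Rightarrow> nat) set" where
  "compositions n = {L. (\<Sum>a\<in>UNIV. L a) = n}"

definition jacobi_compositions :: "nat \<Rightarrow> ('r::finite \<times> 'r \<Rightarrow> nat) set" where
  "jacobi_compositions n = {R. (\<Sum>a\<in>UNIV. R a) = n}"

definition weight_count :: "'r::finite list set \<Rightarrow> ('r \<Rightarrow> nat) \<Rightarrow> nat" where
  "weight_count C L = card {u\<in>C. \<forall>a. ell a u = L a}"

definition multinomial :: "nat \<Rightarrow> ('i::finite \<Rightarrow> nat) \<Rightarrow> nat" where
  "multinomial m f = fact m div (\<Prod>a\<in>UNIV. fact (f a))"

definition jac :: "'r::finite list set \<Rightarrow> 'r list \<Rightarrow> ('r \<times> 'r \<Rightarrow> 'c::comm_semiring_1) \<Rightarrow> 'c" where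
  "jac C w x = (\<Sum>u\<in>C. \<Prod>a\<in>UNIV. x a ^ rcount a u w)"

definition perm_word :: "nat \<Rightarrow> (nat \<Rightarrow> nat) \<Rightarrow> 'a list \<Rightarrow> 'a list" where
  "perm_word n \<sigma> u = map (\<lambda>i. u ! \<sigma> i) [0..<n]"

definition jac_av :: "nat \<Rightarrow> 'r::finite list set \<Rightarrow> 'r list \<Rightarrow> ('r \<times> 'r \<Rightarrow> real) \<Rightarrow> real" where
  "jac_av n C w x = (1 / fact n) * (\<Sum>\<sigma>\<in>{\<sigma>. \<sigma> permutes {..<n}}. jac (perm_word n \<sigma> ` C) w x)"

end

theory Submission
  imports Defs
begin

definition cnt :: "nat \<Rightarrow> (nat \<Rightarrow> 'a) \<Rightarrow> 'a \<Rightarrow> nat" where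
  "cnt n U c = card {i. i < n \<and> U i = c}"

definition prof :: "nat \<Rightarrow> (nat \<Rightarrow> 'a) \<Rightarrow> (nat \<Rightarrow> 'b) \<Rightarrow> (nat \<Rightarrow> nat) \<Rightarrow> 'a \<times> 'b \<Rightarrow> nat" where
  "prof n U W \<sigma> a = card {i. i < n \<and> (U (\<sigma> i), W i) = a}"

lemma cnt_Suc: "cnt (Suc n) U c = cnt n U c + (if U n = c then 1 else 0)"
proof -
  have "{i. i < Suc n \<and> U i = c} = {i. i < n \<and> U i = c} \<union> (if U n = c then {n} else {})"
    by (auto simp: less_Suc_eq)
  then show ?thesis unfolding cnt_def by (auto simp: card_insert_if)
qed

lemma cnt_0[simp]: "cnt 0 U c = 0" by (simp add: cnt_def)

lemma sum_by_cnt: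
  fixes f :: "'a::finite \<Rightarrow> 'b::comm_semiring_1"
  shows "(\<Sum>j<m. f (U j)) = (\<Sum>c\<in>UNIV. of_nat (cnt m U c) * f c)"
proof (induction m)
  case 0 then show ?case by simp
next
  case (Suc m)
  have e1: "(\<Sum>c\<in>UNIV. of_nat (cnt (Suc m) U c) * f c) =
        (\<Sum>c\<in>UNIV. of_nat (cnt m U c) * f c) + (\<Sum>c\<in>UNIV. of_nat (if U m = c then 1 else 0) * f c)"
    by (simp add: cnt_Suc sum.distrib distrib_right)
  have e2: "(\<Sum>c\<in>UNIV. of_nat (if U m = c then 1 else 0) * f c) = (\<Sum>c\<in>UNIV. (if U m = c then f c else 0))"
    by (intro sum.cong) auto
  have e3: "(\<Sum>c\<in>UNIV. (if U m = c then f c else 0)) = f (U m)"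
    by (simp add: sum.delta)
  show ?case using Suc e1 e2 e3 by simp
qed

lemma prof_step:
  assumes q: "q permutes {..<n}" and j: "j \<le> n"
  shows "prof (Suc n) U W (Transposition.transpose n j \<circ> q) a =
    prof n (U \<circ> Transposition.transpose n j) W q a + (if a = (U j, W n) then 1 else 0)"
proof -
  have qn: "q n = n" using q by (simp add: permutes_not_in)
  have "{i. i < Suc n \<and> (U ((Transposition.transpose n j \<circ> q) i), W i) = a} =
        {i. i < n \<and> ((U \<circ> Transposition.transpose n j) (q i), W i) = a} \<union>
        (if a = (U j, W n) then {n} else {})"
    using qn by (auto simp: less_Suc_eq)
  then show ?thesis unfolding prof_def by (auto simp: card_insert_if)
qed

lemma cnt_transpose:
  assumes j: "j \<le> n"
  shows "cnt n (U \<circ> Transposition.transpose n j) c = cnt (Suc n) U c - (if U j = c then 1 else 0)"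
proof -
  let ?t = "Transposition.transpose n j"
  have tx: "?t x = (if x = j then n else x)" if "x \<noteq> n" for x
    using that by (simp add: transpose_def)
  have tn: "?t n = j" by (simp add: transpose_def)
  have inj: "inj_on ?t A" for A
    by simp
  have img: "?t ` {i. i < n \<and> U (?t i) = c} = {i. i < Suc n \<and> U i = c} - {j}"
  proof (intro equalityI subsetI)
    fix y assume "y \<in> ?t ` {i. i < n \<and> U (?t i) = c}"
    then obtain x where x: "x < n" "U (?t x) = c" "y = ?t x" by blast
    have "x \<noteq> n" using x by simp
    then have "y = (if x = j then n else x)" using x tx by simp
    then show "y \<in> {i. i < Suc n \<and> U i = c} - {j}" using x j by (auto split: if_splits)
  next
    fix y assume y: "y \<in> {i. i < Suc n \<and> U i = c} - {j}"
    show "y \<in> ?t ` {i. i < n \<and> U (?t i) = c}"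
    proof (cases "y = n")
      case True
      then have "j < n" "?t j = y" using y j tn by (auto simp: transpose_def)
      then show ?thesis using y by (intro image_eqI[of _ _ j]) auto
    next
      case False
      then have "y < n" "?t y = y" using y tx by auto
      then show ?thesis using y by (intro image_eqI[of _ _ y]) auto
    qed
  qed
  have bij: "bij_betw ?t {i. i < n \<and> U (?t i) = c} ({i. i < Suc n \<and> U i = c} - {j})"
    using inj img by (simp add: bij_betw_def)
  have "cnt n (U \<circ> ?t) c = card ({i. i < Suc n \<and> U i = c} - {j})"
    unfolding cnt_def using bij_betw_same_card[OF bij] by simp
  also have "\<dots> = cnt (Suc n) U c - (if U j = c then 1 else 0)"
    unfolding cnt_def using j by (simp add: card_Diff_singleton_if)
  finally show ?thesis .
qed


lemma prod_fact_dec: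
  fixes g :: "'a::finite \<Rightarrow> nat"
  assumes "g a0 \<ge> 1"
  shows "(\<Prod>a\<in>UNIV. fact (g a) :: nat) = g a0 * (\<Prod>a\<in>UNIV. fact ((g(a0 := g a0 - 1)) a))"
proof -
  have e1: "(\<Prod>a\<in>UNIV. fact (g a) :: nat) = fact (g a0) * (\<Prod>a\<in>UNIV-{a0}. fact (g a))"
    by (simp add: prod.remove)
  have e2: "(\<Prod>a\<in>UNIV-{a0}. fact (g a) :: nat) = (\<Prod>a\<in>UNIV-{a0}. fact ((g(a0 := g a0 - 1)) a))"
    by (intro prod.cong) auto
  have e3: "fact (g a0) = (g a0) * (fact (g a0 - 1) :: nat)"
    using assms by (cases "g a0") auto
  have e4: "(\<Prod>a\<in>UNIV. fact ((g(a0 := g a0 - 1)) a) :: nat) =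
      fact ((g(a0 := g a0 - 1)) a0) * (\<Prod>a\<in>UNIV-{a0}. fact ((g(a0 := g a0 - 1)) a))"
    by (rule prod.remove) auto
  show ?thesis unfolding e1 e4 e2 e3 by simp
qed

lemma upd_iff:
  fixes f R :: "'a \<Rightarrow> nat"
  assumes "R x > 0"
  shows "(f(x := f x + 1) = R) \<longleftrightarrow> (f = R(x := R x - 1))"
proof
  assume h: "f(x := f x + 1) = R"
  show "f = R(x := R x - 1)"
  proof
    fix y show "f y = (R(x := R x - 1)) y"
      using fun_cong[OF h, of y] by (cases "y = x") auto
  qed
next
  assume h: "f = R(x := R x - 1)"
  show "f(x := f x + 1) = R"
  proof
    fix y show "(f(x := f x + 1)) y = R y"
      using h assms by (cases "y = x") auto
  qed
qed

lemma card_as_sum: "finite A \<Longrightarrow> card {x\<in>A. P x} = (\<Sum>x\<in>A. if P x then 1 else 0)"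
  by (simp add: sum.If_cases Int_def)

lemma count_main:
  fixes U :: "nat \<Rightarrow> 'a::finite" and W :: "nat \<Rightarrow> 'b::finite" and R :: "'a \<times> 'b \<Rightarrow> nat"
  assumes "\<forall>c. (\<Sum>b\<in>UNIV. R (c, b)) = cnt n U c" "\<forall>b. (\<Sum>c\<in>UNIV. R (c, b)) = cnt n W b"
  shows "card {\<sigma>. \<sigma> permutes {..<n} \<and> prof n U W \<sigma> = R} * (\<Prod>a\<in>UNIV. fact (R a)) =
         (\<Prod>c\<in>UNIV. fact (cnt n U c)) * (\<Prod>b\<in>UNIV. fact (cnt n W b))"
  using assms
proof (induction n arbitrary: U W R)
  case 0
  have R0: "R = (\<lambda>_. 0)"
  proof
    fix a :: "'a \<times> 'b"
    obtain c b where a: "a = (c, b)" by fastforce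
    have "(\<Sum>b\<in>UNIV. R (c, b)) = 0" using 0 by simp
    then show "R a = 0" using a by simp
  qed
  have "{\<sigma>. \<sigma> permutes {..<0::nat} \<and> prof 0 U W \<sigma> = R} = {id}"
    using R0 by (auto simp: prof_def fun_eq_iff)
  then show ?case using R0 by simp
next
  case (Suc n)
  let ?t = "\<lambda>j. Transposition.transpose n j"
  let ?L = "cnt (Suc n) U"
  let ?l = "cnt n W"
  let ?b0 = "W n"
  define PR where "PR = (\<Prod>a\<in>UNIV. fact (R a) :: nat)"
  define Q where "Q = (\<lambda>j. (\<Sum>q\<in>{p. p permutes {..<n}}. if prof (Suc n) U W (?t j \<circ> q) = R then 1 else 0) :: nat)"
  have fin: "finite {p. p permutes {..<n}}" by (simp add: finite_permutations)
  have K: "card {\<sigma>. \<sigma> permutes {..<Suc n} \<and> prof (Suc n) U W \<sigma> = R} = (\<Sum>j\<in>{..<Suc n}. Q j)"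
  proof -
    have "card {\<sigma>. \<sigma> permutes {..<Suc n} \<and> prof (Suc n) U W \<sigma> = R} =
        card {\<sigma>\<in>{p. p permutes insert n {..<n}}. prof (Suc n) U W \<sigma> = R}"
      by (simp add: lessThan_Suc)
    also have "\<dots> = (\<Sum>\<sigma>\<in>{p. p permutes insert n {..<n}}. if prof (Suc n) U W \<sigma> = R then 1 else 0)"
      by (rule card_as_sum) (simp add: finite_permutations)
    also have "\<dots> = (\<Sum>j\<in>insert n {..<n}. Q j)"
      unfolding Q_def by (rule sum_over_permutations_insert) auto
    finally show ?thesis by (simp add: lessThan_Suc)
  qed
  define Lj where "Lj = (\<lambda>c. ?L(c := ?L c - 1))"
  have Qj: "Q j * PR = R (U j, ?b0) * ((\<Prod>c\<in>UNIV. fact (Lj (U j) c)) * (\<Prod>b\<in>UNIV. fact (?l b)))"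
    if j: "j < Suc n" for j
  proof -
    have jn: "j \<le> n" using j by simp
    have pf: "prof (Suc n) U W (?t j \<circ> q) = (prof n (U \<circ> ?t j) W q)((U j, ?b0) := prof n (U \<circ> ?t j) W q (U j, ?b0) + 1)"
      if "q permutes {..<n}" for q
      by (auto simp: fun_eq_iff prof_step[OF that jn])
    show ?thesis
    proof (cases "R (U j, ?b0) = 0")
      case True
      have "Q j = 0" unfolding Q_def
      proof (intro sum.neutral ballI)
        fix q assume "q \<in> {p. p permutes {..<n}}"
        then have "prof (Suc n) U W (?t j \<circ> q) (U j, ?b0) \<noteq> R (U j, ?b0)" using pf True by simp
        then show "(if prof (Suc n) U W (?t j \<circ> q) = R then 1 else 0) = (0::nat)" by auto
      qed
      then show ?thesis using True by simp
    next
      case False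
      define R' where "R' = R((U j, ?b0) := R (U j, ?b0) - 1)"
      have eqv: "prof (Suc n) U W (?t j \<circ> q) = R \<longleftrightarrow> prof n (U \<circ> ?t j) W q = R'"
        if "q permutes {..<n}" for q
        unfolding pf[OF that] R'_def using False by (intro upd_iff) simp
      have "Q j = card {q\<in>{p. p permutes {..<n}}. prof n (U \<circ> ?t j) W q = R'}"
        unfolding Q_def card_as_sum[OF fin] by (intro sum.cong) (auto simp: eqv)
      also have "\<dots> = card {q. q permutes {..<n} \<and> prof n (U \<circ> ?t j) W q = R'}" by simp
      finally have Qc: "Q j = \<dots>" .
      have m1: "\<forall>c. (\<Sum>b\<in>UNIV. R' (c, b)) = cnt n (U \<circ> ?t j) c"
      proof
        fix c
        have "(\<Sum>b\<in>UNIV. R' (c, b)) = (\<Sum>b\<in>UNIV. R (c, b)) - (if U j = c then 1 else 0)"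
        proof (cases "U j = c")
          case True
          have "(\<Sum>b\<in>UNIV. R (c, b)) = R (c, ?b0) + (\<Sum>b\<in>UNIV-{?b0}. R (c, b))"
            by (simp add: sum.remove)
          moreover have "(\<Sum>b\<in>UNIV. R' (c, b)) = R' (c, ?b0) + (\<Sum>b\<in>UNIV-{?b0}. R' (c, b))"
            by (simp add: sum.remove)
          moreover have "(\<Sum>b\<in>UNIV-{?b0}. R' (c, b)) = (\<Sum>b\<in>UNIV-{?b0}. R (c, b))"
            unfolding R'_def by (intro sum.cong) auto
          ultimately show ?thesis using True False unfolding R'_def by simp
        next
          case False
          then show ?thesis unfolding R'_def by simp
        qed
        then show "(\<Sum>b\<in>UNIV. R' (c, b)) = cnt n (U \<circ> ?t j) c"
          using Suc.prems(1) cnt_transpose[OF jn, of U] by simp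
      qed
      have m2: "\<forall>b. (\<Sum>c\<in>UNIV. R' (c, b)) = cnt n W b"
      proof
        fix b
        have "(\<Sum>c\<in>UNIV. R' (c, b)) = (\<Sum>c\<in>UNIV. R (c, b)) - (if ?b0 = b then 1 else 0)"
        proof (cases "?b0 = b")
          case True
          have "(\<Sum>c\<in>UNIV. R (c, b)) = R (U j, b) + (\<Sum>c\<in>UNIV-{U j}. R (c, b))"
            by (simp add: sum.remove)
          moreover have "(\<Sum>c\<in>UNIV. R' (c, b)) = R' (U j, b) + (\<Sum>c\<in>UNIV-{U j}. R' (c, b))"
            by (simp add: sum.remove)
          moreover have "(\<Sum>c\<in>UNIV-{U j}. R' (c, b)) = (\<Sum>c\<in>UNIV-{U j}. R (c, b))"
            unfolding R'_def by (intro sum.cong) auto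
          ultimately show ?thesis using True False unfolding R'_def by simp
        next
          case False
          then show ?thesis unfolding R'_def by simp
        qed
        then show "(\<Sum>c\<in>UNIV. R' (c, b)) = cnt n W b"
          using Suc.prems(2) cnt_Suc[of n W b] by simp
      qed
      have IH: "card {q. q permutes {..<n} \<and> prof n (U \<circ> ?t j) W q = R'} * (\<Prod>a\<in>UNIV. fact (R' a)) =
         (\<Prod>c\<in>UNIV. fact (cnt n (U \<circ> ?t j) c)) * (\<Prod>b\<in>UNIV. fact (cnt n W b))"
        using Suc.IH[OF m1 m2] .
      have PR': "PR = R (U j, ?b0) * (\<Prod>a\<in>UNIV. fact (R' a))"
      proof -
        have "1 \<le> R (U j, ?b0)" using False by simp
        then show ?thesis unfolding PR_def R'_def by (rule prod_fact_dec)
      qed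
      have LL: "cnt n (U \<circ> ?t j) = Lj (U j)"
        unfolding Lj_def using cnt_transpose[OF jn, of U] by (auto simp: fun_eq_iff)
      have "Q j * PR = R (U j, ?b0) * (card {q. q permutes {..<n} \<and> prof n (U \<circ> ?t j) W q = R'} * (\<Prod>a\<in>UNIV. fact (R' a)))"
        unfolding PR' Qc by (simp only: mult_ac)
      also have "\<dots> = R (U j, ?b0) * ((\<Prod>c\<in>UNIV. fact (cnt n (U \<circ> ?t j) c)) * (\<Prod>b\<in>UNIV. fact (cnt n W b)))"
        unfolding IH ..
      finally show ?thesis unfolding LL .
    qed
  qed
  have "card {\<sigma>. \<sigma> permutes {..<Suc n} \<and> prof (Suc n) U W \<sigma> = R} * PR = (\<Sum>j<Suc n. Q j * PR)"
    unfolding K by (rule sum_distrib_right)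
  also have "\<dots> = (\<Sum>j<Suc n. R (U j, ?b0) * (\<Prod>c\<in>UNIV. fact (Lj (U j) c)) * (\<Prod>b\<in>UNIV. fact (?l b)))"
    using Qj by (intro sum.cong) (simp_all add: mult.assoc)
  also have "\<dots> = (\<Sum>j<Suc n. R (U j, ?b0) * (\<Prod>c\<in>UNIV. fact (Lj (U j) c))) * (\<Prod>b\<in>UNIV. fact (?l b))"
    by (rule sum_distrib_right[symmetric])
  also have "(\<Sum>j<Suc n. R (U j, ?b0) * (\<Prod>c\<in>UNIV. fact (Lj (U j) c))) =
      (\<Sum>c\<in>UNIV. ?L c * (R (c, ?b0) * (\<Prod>c'\<in>UNIV. fact (Lj c c'))))"
    using sum_by_cnt[where f="\<lambda>c. R (c, ?b0) * (\<Prod>c'\<in>UNIV. fact (Lj c c'))" and m="Suc n" and U=U] by simp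
  also have "\<dots> = (\<Sum>c\<in>UNIV. R (c, ?b0) * (\<Prod>c'\<in>UNIV. fact (?L c')))"
  proof (intro sum.cong refl)
    fix c
    show "?L c * (R (c, ?b0) * (\<Prod>c'\<in>UNIV. fact (Lj c c'))) = R (c, ?b0) * (\<Prod>c'\<in>UNIV. fact (?L c'))"
    proof (cases "?L c = 0")
      case True
      have "R (c, ?b0) \<le> (\<Sum>b\<in>UNIV. R (c, b))" by (rule member_le_sum) auto
      then have "R (c, ?b0) = 0" using True Suc.prems(1) by simp
      then show ?thesis by simp
    next
      case False
      have "(\<Prod>c'\<in>UNIV. fact (?L c')) = ?L c * (\<Prod>c'\<in>UNIV. fact (Lj c c'))"
        unfolding Lj_def by (rule prod_fact_dec) (use False in simp)
      then show ?thesis by (simp only: mult_ac)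
    qed
  qed
  also have "\<dots> = (\<Sum>c\<in>UNIV. R (c, ?b0)) * (\<Prod>c'\<in>UNIV. fact (?L c'))"
    by (simp add: sum_distrib_right)
  also have "(\<Sum>c\<in>UNIV. R (c, ?b0)) = ?l ?b0 + 1"
    using Suc.prems(2) cnt_Suc[of n W ?b0] by simp
  finally have A: "card {\<sigma>. \<sigma> permutes {..<Suc n} \<and> prof (Suc n) U W \<sigma> = R} * PR =
      (?l ?b0 + 1) * (\<Prod>c'\<in>UNIV. fact (?L c')) * (\<Prod>b\<in>UNIV. fact (?l b))" .
  have B: "(\<Prod>b\<in>UNIV. fact (cnt (Suc n) W b) :: nat) = (?l ?b0 + 1) * (\<Prod>b\<in>UNIV. fact (?l b))"
  proof -
    have "cnt (Suc n) W ?b0 \<ge> 1" by (simp add: cnt_Suc)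
    from prod_fact_dec[where g="cnt (Suc n) W" and ?a0.0="W n", OF this]
    have X: "(\<Prod>b\<in>UNIV. fact (cnt (Suc n) W b) :: nat) = cnt (Suc n) W ?b0 * (\<Prod>b\<in>UNIV. fact (((cnt (Suc n) W)(?b0 := cnt (Suc n) W ?b0 - 1)) b))" .
    have Y: "(cnt (Suc n) W)(?b0 := cnt (Suc n) W ?b0 - 1) = ?l"
      by (auto simp: fun_eq_iff cnt_Suc)
    have Z: "cnt (Suc n) W ?b0 = ?l ?b0 + 1" by (simp add: cnt_Suc)
    show ?thesis using X[unfolded Y] unfolding Z .
  qed
  show ?case using A unfolding PR_def B by (simp only: mult_ac)
qed


lemma cnt_sum: "cnt n V a = (\<Sum>i<n. if V i = a then 1 else 0)"
proof -
  have "cnt n V a = card {i\<in>{..<n}. V i = a}" unfolding cnt_def by (intro arg_cong[where f=card]) auto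
  also have "\<dots> = (\<Sum>i<n. if V i = a then 1 else 0)" by (rule card_as_sum) simp
  finally show ?thesis .
qed

lemma prof_cnt: "prof n U W \<sigma> = cnt n (\<lambda>i. (U (\<sigma> i), W i))"
  unfolding prof_def cnt_def by (simp add: fun_eq_iff)

lemma sum_cnt: "(\<Sum>a\<in>(UNIV::'a::finite set). cnt n V a) = n"
  using sum_by_cnt[where f="\<lambda>_. (1::nat)" and m=n and U=V] by simp

lemma cnt_perm:
  assumes "\<sigma> permutes {..<n}"
  shows "cnt n (U \<circ> \<sigma>) c = cnt n U c"
proof -
  have img: "\<sigma> ` {i. i < n \<and> U (\<sigma> i) = c} = {i. i < n \<and> U i = c}"
  proof (intro equalityI subsetI)
    fix y assume "y \<in> \<sigma> ` {i. i < n \<and> U (\<sigma> i) = c}"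
    then obtain x where "x < n" "U (\<sigma> x) = c" "y = \<sigma> x" by blast
    then show "y \<in> {i. i < n \<and> U i = c}" using permutes_in_image[OF assms] by auto
  next
    fix y assume y: "y \<in> {i. i < n \<and> U i = c}"
    have "y \<in> \<sigma> ` {..<n}" using y permutes_image[OF assms] by auto
    then obtain x where "x < n" "y = \<sigma> x" by auto
    then show "y \<in> \<sigma> ` {i. i < n \<and> U (\<sigma> i) = c}" using y by auto
  qed
  have inj: "inj_on \<sigma> {i. i < n \<and> U (\<sigma> i) = c}"
    using permutes_inj[OF assms] by (auto intro: inj_on_subset)
  have "cnt n (U \<circ> \<sigma>) c = card {i. i < n \<and> U (\<sigma> i) = c}" by (simp add: cnt_def)
  also have "\<dots> = card (\<sigma> ` {i. i < n \<and> U (\<sigma> i) = c})" by (rule card_image[OF inj, symmetric])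
  also have "\<dots> = cnt n U c" unfolding img cnt_def ..
  finally show ?thesis .
qed

lemma prof_row:
  fixes U :: "nat \<Rightarrow> 'a::finite" and W :: "nat \<Rightarrow> 'b::finite"
  assumes "\<sigma> permutes {..<n}"
  shows "(\<Sum>b\<in>UNIV. prof n U W \<sigma> (c, b)) = cnt n U c"
proof -
  have "(\<Sum>b\<in>UNIV. prof n U W \<sigma> (c, b)) = (\<Sum>b\<in>UNIV. \<Sum>i<n. if (U (\<sigma> i), W i) = (c, b) then 1 else 0)"
    unfolding prof_cnt cnt_sum ..
  also have "\<dots> = (\<Sum>i<n. \<Sum>b\<in>UNIV. if (U (\<sigma> i), W i) = (c, b) then 1 else 0)"
    by (rule sum.swap)
  also have "\<dots> = (\<Sum>i<n. if (U \<circ> \<sigma>) i = c then 1 else 0)"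
  proof (intro sum.cong refl)
    fix i
    have "(\<Sum>b\<in>UNIV. if (U (\<sigma> i), W i) = (c, b) then 1 else (0::nat)) =
          (\<Sum>b\<in>UNIV. if b = W i then (if U (\<sigma> i) = c then 1 else 0) else 0)"
      by (intro sum.cong) auto
    then show "(\<Sum>b\<in>UNIV. if (U (\<sigma> i), W i) = (c, b) then 1 else (0::nat)) = (if (U \<circ> \<sigma>) i = c then 1 else 0)"
      by (simp add: sum.delta')
  qed
  also have "\<dots> = cnt n (U \<circ> \<sigma>) c" unfolding cnt_sum ..
  finally show ?thesis using cnt_perm[OF assms] by simp
qed

lemma prof_col:
  fixes U :: "nat \<Rightarrow> 'a::finite" and W :: "nat \<Rightarrow> 'b::finite"
  shows "(\<Sum>c\<in>UNIV. prof n U W \<sigma> (c, b)) = cnt n W b"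
proof -
  have "(\<Sum>c\<in>UNIV. prof n U W \<sigma> (c, b)) = (\<Sum>c\<in>UNIV. \<Sum>i<n. if (U (\<sigma> i), W i) = (c, b) then 1 else 0)"
    unfolding prof_cnt cnt_sum ..
  also have "\<dots> = (\<Sum>i<n. \<Sum>c\<in>UNIV. if (U (\<sigma> i), W i) = (c, b) then 1 else 0)"
    by (rule sum.swap)
  also have "\<dots> = (\<Sum>i<n. if W i = b then 1 else 0)"
  proof (intro sum.cong refl)
    fix i
    have "(\<Sum>c\<in>UNIV. if (U (\<sigma> i), W i) = (c, b) then 1 else (0::nat)) =
          (\<Sum>c\<in>UNIV. if c = U (\<sigma> i) then (if W i = b then 1 else 0) else 0)"
      by (intro sum.cong) auto
    then show "(\<Sum>c\<in>UNIV. if (U (\<sigma> i), W i) = (c, b) then 1 else (0::nat)) = (if W i = b then 1 else 0)"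
      by (simp add: sum.delta')
  qed
  also have "\<dots> = cnt n W b" unfolding cnt_sum ..
  finally show ?thesis .
qed


lemma rcount_pw:
  assumes "length u = n" "length w = n"
  shows "rcount a (perm_word n \<sigma> u) w = prof n (\<lambda>i. u ! i) (\<lambda>i. w ! i) \<sigma> a"
  unfolding rcount_def prof_def perm_word_def using assms
  by (intro arg_cong[where f=card]) auto

lemma pw_inj:
  assumes "\<sigma> permutes {..<n}"
  shows "inj_on (perm_word n \<sigma>) {u. length u = n}"
proof (rule inj_onI)
  fix u v assume u: "u \<in> {u. length u = n}" and v: "v \<in> {u. length u = n}"
    and eq: "perm_word n \<sigma> u = perm_word n \<sigma> v"
  have h: "u ! \<sigma> i = v ! \<sigma> i" if "i < n" for i
  proof -
    have "perm_word n \<sigma> u ! i = perm_word n \<sigma> v ! i" using eq by simp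
    then show ?thesis using that by (simp add: perm_word_def)
  qed
  show "u = v"
  proof (rule nth_equalityI)
    show "length u = length v" using u v by simp
  next
    fix k assume "k < length u"
    then have "k \<in> \<sigma> ` {..<n}" using u permutes_image[OF assms] by simp
    then obtain i where "i < n" "k = \<sigma> i" by auto
    then show "u ! k = v ! k" using h by simp
  qed
qed

lemma finite_bounded_funs: "finite {f :: 'a::finite \<Rightarrow> nat. \<forall>a. f a \<le> n}"
proof -
  have "finite {f :: 'a \<Rightarrow> nat. \<forall>x. (x \<in> UNIV \<longrightarrow> f x \<in> {..n}) \<and> (x \<notin> UNIV \<longrightarrow> f x = 0)}"
    by (rule finite_set_of_finite_funs) auto
  then show ?thesis by simp
qed

lemma finite_sum_eq: "finite {f :: 'a::finite \<Rightarrow> nat. (\<Sum>a\<in>UNIV. f a) = n}"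
proof (rule finite_subset[OF _ finite_bounded_funs[of n]])
  show "{f :: 'a \<Rightarrow> nat. (\<Sum>a\<in>UNIV. f a) = n} \<subseteq> {f. \<forall>a. f a \<le> n}"
  proof (intro subsetI CollectI allI)
    fix f :: "'a \<Rightarrow> nat" and a assume "f \<in> {f :: 'a \<Rightarrow> nat. (\<Sum>a\<in>UNIV. f a) = n}"
    then have "(\<Sum>a\<in>UNIV. f a) = n" by simp
    moreover have "f a \<le> (\<Sum>a\<in>UNIV. f a)" by (rule member_le_sum) auto
    ultimately show "f a \<le> n" by simp
  qed
qed

lemma dvd_fact_sum:
  assumes "finite A"
  shows "(\<Prod>a\<in>A. fact (f a)) dvd (fact (\<Sum>a\<in>A. f a) :: nat)"
  using assms
proof (induction A rule: finite_induct)
  case empty then show ?case by simp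
next
  case (insert a A)
  let ?s = "\<Sum>a\<in>A. f a"
  have "fact (f a) * fact ?s * (f a + ?s choose f a) = (fact (f a + ?s) :: nat)"
    using binomial_fact_lemma[of "f a" "f a + ?s"] by simp
  then have d1: "fact (f a) * fact ?s dvd (fact (f a + ?s) :: nat)" by (metis dvd_triv_left)
  have d2: "fact (f a) * (\<Prod>a\<in>A. fact (f a)) dvd (fact (f a) * fact ?s :: nat)"
    using insert.IH by (rule mult_dvd_mono[OF dvd_refl])
  have "fact (f a) * (\<Prod>a\<in>A. fact (f a)) dvd (fact (f a + ?s) :: nat)"
    by (rule dvd_trans[OF d2 d1])
  then show ?case using insert by simp
qed

lemma real_multinomial:
  fixes f :: "'i::finite \<Rightarrow> nat"
  assumes "(\<Sum>a\<in>UNIV. f a) = m"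
  shows "real (multinomial m f) = fact m / (\<Prod>a\<in>UNIV. fact (f a))"
proof -
  have "(\<Prod>a\<in>UNIV. fact (f a)) dvd (fact m :: nat)" using dvd_fact_sum[of UNIV f] assms by simp
  then have "real (fact m div (\<Prod>a\<in>UNIV. fact (f a))) = real (fact m) / real (\<Prod>a\<in>UNIV. fact (f a))"
    by (rule real_of_nat_div)
  then show ?thesis unfolding multinomial_def by simp
qed

lemma cnt_ell: "length u = n \<Longrightarrow> cnt n (\<lambda>i. u ! i) c = ell c u"
  unfolding cnt_def ell_def by simp


lemma per_u:
  fixes u w :: "'r::finite list" and x :: "'r \<times> 'r \<Rightarrow> real"
  assumes u: "length u = n" and w: "length w = n"
  shows "(\<Sum>\<sigma>\<in>{\<sigma>. \<sigma> permutes {..<n}}. \<Prod>a\<in>UNIV. x a ^ rcount a (perm_word n \<sigma> u) w) / fact n =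
    (\<Sum>R\<in>{R\<in>jacobi_compositions n. (\<forall>c. ell c u = (\<Sum>b\<in>UNIV. R (c, b))) \<and>
                                      (\<forall>c. ell c w = (\<Sum>b\<in>UNIV. R (b, c)))}.
        (\<Prod>b\<in>UNIV. real (multinomial (ell b w) (\<lambda>c. R (c, b)))) / real (multinomial n (\<lambda>c. ell c u)) *
        (\<Prod>a\<in>UNIV. x a ^ R a))"
proof -
  define U where "U = (\<lambda>i. u ! i)"
  define W where "W = (\<lambda>i. w ! i)"
  define P where "P = {\<sigma>. \<sigma> permutes {..<n}}"
  define S where "S = {R\<in>jacobi_compositions n. (\<forall>c. ell c u = (\<Sum>b\<in>UNIV. R (c, b))) \<and>
                                      (\<forall>c. ell c w = (\<Sum>b\<in>UNIV. R (b, c)))}"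
  define h where "h = (\<lambda>R. \<Prod>a\<in>UNIV. x a ^ R a)"
  have finP: "finite P" unfolding P_def by (simp add: finite_permutations)
  have finS: "finite S" unfolding S_def jacobi_compositions_def
    by (rule finite_subset[OF _ finite_sum_eq[of n]]) auto
  have cU: "cnt n U c = ell c u" for c unfolding U_def using cnt_ell[OF u] .
  have cW: "cnt n W c = ell c w" for c unfolding W_def using cnt_ell[OF w] .
  have img: "prof n U W ` P \<subseteq> S"
  proof
    fix R assume "R \<in> prof n U W ` P"
    then obtain \<sigma> where s: "\<sigma> permutes {..<n}" "R = prof n U W \<sigma>" unfolding P_def by auto
    have "(\<Sum>a\<in>UNIV. R a) = n" unfolding s prof_cnt by (rule sum_cnt)
    moreover have "\<forall>c. ell c u = (\<Sum>b\<in>UNIV. R (c, b))" using prof_row[OF s(1), of U W] cU s(2) by simp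
    moreover have "\<forall>c. ell c w = (\<Sum>b\<in>UNIV. R (b, c))" using prof_col[of n U W \<sigma>] cW s(2) by simp
    ultimately show "R \<in> S" unfolding S_def jacobi_compositions_def by simp
  qed
  have "(\<Sum>\<sigma>\<in>P. \<Prod>a\<in>UNIV. x a ^ rcount a (perm_word n \<sigma> u) w) = (\<Sum>\<sigma>\<in>P. h (prof n U W \<sigma>))"
    unfolding h_def U_def W_def using rcount_pw[OF u w] by simp
  also have "\<dots> = (\<Sum>R\<in>S. \<Sum>\<sigma>\<in>{\<sigma>. \<sigma> \<in> P \<and> prof n U W \<sigma> = R}. h (prof n U W \<sigma>))"
    by (rule sum.group[symmetric, OF finP finS img])
  also have "\<dots> = (\<Sum>R\<in>S. real (card {\<sigma>. \<sigma> permutes {..<n} \<and> prof n U W \<sigma> = R}) * h R)"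
  proof (intro sum.cong refl)
    fix R
    have "(\<Sum>\<sigma>\<in>{\<sigma>. \<sigma> \<in> P \<and> prof n U W \<sigma> = R}. h (prof n U W \<sigma>)) = (\<Sum>\<sigma>\<in>{\<sigma>. \<sigma> \<in> P \<and> prof n U W \<sigma> = R}. h R)"
      by (intro sum.cong) auto
    then show "(\<Sum>\<sigma>\<in>{\<sigma>. \<sigma> \<in> P \<and> prof n U W \<sigma> = R}. h (prof n U W \<sigma>)) =
        real (card {\<sigma>. \<sigma> permutes {..<n} \<and> prof n U W \<sigma> = R}) * h R"
      unfolding P_def by simp
  qed
  finally have E: "(\<Sum>\<sigma>\<in>P. \<Prod>a\<in>UNIV. x a ^ rcount a (perm_word n \<sigma> u) w) =
      (\<Sum>R\<in>S. real (card {\<sigma>. \<sigma> permutes {..<n} \<and> prof n U W \<sigma> = R}) * h R)" .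
  have coef: "real (card {\<sigma>. \<sigma> permutes {..<n} \<and> prof n U W \<sigma> = R}) / fact n =
      (\<Prod>b\<in>UNIV. real (multinomial (ell b w) (\<lambda>c. R (c, b)))) / real (multinomial n (\<lambda>c. ell c u))"
    if R: "R \<in> S" for R
  proof -
    have m1: "\<forall>c. (\<Sum>b\<in>UNIV. R (c, b)) = cnt n U c" using R cU unfolding S_def by simp
    have m2: "\<forall>b. (\<Sum>c\<in>UNIV. R (c, b)) = cnt n W b" using R cW unfolding S_def by simp
    have K: "card {\<sigma>. \<sigma> permutes {..<n} \<and> prof n U W \<sigma> = R} * (\<Prod>a\<in>UNIV. fact (R a)) =
         (\<Prod>c\<in>UNIV. fact (ell c u)) * (\<Prod>b\<in>UNIV. fact (ell b w))"
      using count_main[OF m1 m2] unfolding cU cW .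
    define k where "k = card {\<sigma>. \<sigma> permutes {..<n} \<and> prof n U W \<sigma> = R}"
    have Kr: "real k * (\<Prod>a\<in>UNIV. fact (R a)) = (\<Prod>c\<in>UNIV. fact (ell c u)) * (\<Prod>b\<in>UNIV. fact (ell b w))"
      using arg_cong[OF K[folded k_def], of real] by simp
    have mb: "real (multinomial (ell b w) (\<lambda>c. R (c, b))) = fact (ell b w) / (\<Prod>c\<in>UNIV. fact (R (c, b)))" for b
      by (rule real_multinomial) (use m2 cW in simp)
    have mn: "real (multinomial n (\<lambda>c. ell c u)) = fact n / (\<Prod>c\<in>UNIV. fact (ell c u))"
      by (rule real_multinomial) (use sum_cnt[of n U] cU in simp)
    have pp: "(\<Prod>b\<in>UNIV. \<Prod>c\<in>UNIV. fact (R (c, b)) :: real) = (\<Prod>a\<in>UNIV. fact (R a))"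
    proof -
      have "(\<Prod>b\<in>UNIV. \<Prod>c\<in>UNIV. fact (R (c, b)) :: real) = (\<Prod>c\<in>UNIV. \<Prod>b\<in>UNIV. fact (R (c, b)))"
        by (rule prod.swap)
      also have "\<dots> = (\<Prod>a\<in>UNIV \<times> UNIV. fact (R a))"
        by (simp add: prod.cartesian_product)
      finally show ?thesis by simp
    qed
    have "(\<Prod>b\<in>UNIV. real (multinomial (ell b w) (\<lambda>c. R (c, b)))) =
        (\<Prod>b\<in>UNIV. fact (ell b w)) / (\<Prod>a\<in>UNIV. fact (R a))"
      unfolding mb prod_dividef pp ..
    then have "(\<Prod>b\<in>UNIV. real (multinomial (ell b w) (\<lambda>c. R (c, b)))) / real (multinomial n (\<lambda>c. ell c u)) =
        (\<Prod>b\<in>UNIV. fact (ell b w)) / (\<Prod>a\<in>UNIV. fact (R a)) / (fact n / (\<Prod>c\<in>UNIV. fact (ell c u)))"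
      unfolding mn by simp
    also have "\<dots> = real k / fact n"
    proof -
      have nz1: "(\<Prod>a\<in>UNIV. fact (R a) :: real) \<noteq> 0" by (simp add: prod_zero_iff)
      have nz2: "(\<Prod>c\<in>UNIV. fact (ell c u) :: real) \<noteq> 0" by (simp add: prod_zero_iff)
      have nz3: "(fact n :: real) \<noteq> 0" by simp
      have "real k = (\<Prod>c\<in>UNIV. fact (ell c u)) * (\<Prod>b\<in>UNIV. fact (ell b w)) / (\<Prod>a\<in>UNIV. fact (R a))"
        using Kr nz1 by (simp add: field_simps)
      then show ?thesis using nz1 nz2 nz3 by (simp add: field_simps)
    qed
    finally show ?thesis unfolding k_def by simp
  qed
  have "(\<Sum>\<sigma>\<in>P. \<Prod>a\<in>UNIV. x a ^ rcount a (perm_word n \<sigma> u) w) / fact n =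
      (\<Sum>R\<in>S. real (card {\<sigma>. \<sigma> permutes {..<n} \<and> prof n U W \<sigma> = R}) / fact n * h R)"
    unfolding E sum_divide_distrib by (intro sum.cong) auto
  also have "\<dots> = (\<Sum>R\<in>S. (\<Prod>b\<in>UNIV. real (multinomial (ell b w) (\<lambda>c. R (c, b)))) / real (multinomial n (\<lambda>c. ell c u)) * h R)"
    using coef by (intro sum.cong) auto
  finally show ?thesis unfolding P_def S_def h_def .
qed


theorem theorem4p2:
  fixes C :: "('r::{finite,comm_ring_1}) list set" and w :: "'r list" and n :: nat
    and x :: "'r \<times> 'r \<Rightarrow> real"
  assumes ring: "(\<forall>a::'r. a \<noteq> 0 \<longrightarrow> (\<exists>b. a * b = 1)) \<or> (\<forall>a::'r. \<exists>m::nat. a = of_nat m)"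
    and code: "linear_code n C"
    and w: "length w = n"
  shows "jac_av n C w x =
    (\<Sum>L\<in>compositions n.
      \<Sum>R\<in>{R\<in>jacobi_compositions n. (\<forall>c. L c = (\<Sum>b\<in>UNIV. R (c, b))) \<and>
                                      (\<forall>c. ell c w = (\<Sum>b\<in>UNIV. R (b, c)))}.
        real (weight_count C L) *
        (\<Prod>b\<in>UNIV. real (multinomial (ell b w) (\<lambda>c. R (c, b)))) / real (multinomial n L) *
        (\<Prod>a\<in>UNIV. x a ^ R a))"
proof -
  define P where "P = {\<sigma>. \<sigma> permutes {..<n}}"
  define F where "F = (\<lambda>L. \<Sum>R\<in>{R\<in>jacobi_compositions n. (\<forall>c. L c = (\<Sum>b\<in>UNIV. R (c, b))) \<and>
                                      (\<forall>c. ell c w = (\<Sum>b\<in>UNIV. R (b, c)))}.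
        (\<Prod>b\<in>UNIV. real (multinomial (ell b w) (\<lambda>c. R (c, b)))) / real (multinomial n L) *
        (\<Prod>a\<in>UNIV. x a ^ R a))"
  define ev where "ev = (\<lambda>u. (\<lambda>a. ell a (u::'r list)))"
  have Csub: "C \<subseteq> {u. length u = n}" using code unfolding linear_code_def by blast
  have finC: "finite C"
  proof (rule finite_subset[OF _ finite_lists_length_eq[of "UNIV::'r set" n]])
    show "C \<subseteq> {xs. set xs \<subseteq> UNIV \<and> length xs = n}" using Csub by auto
  qed simp
  have finP: "finite P" unfolding P_def by (simp add: finite_permutations)
  have jac_eq: "jac (perm_word n \<sigma> ` C) w x = (\<Sum>u\<in>C. \<Prod>a\<in>UNIV. x a ^ rcount a (perm_word n \<sigma> u) w)"
    if "\<sigma> \<in> P" for \<sigma>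
  proof -
    have "inj_on (perm_word n \<sigma>) C"
      using pw_inj[of \<sigma> n] that Csub unfolding P_def by (auto intro: inj_on_subset)
    then show ?thesis unfolding jac_def by (simp add: sum.reindex)
  qed
  have "jac_av n C w x = (\<Sum>\<sigma>\<in>P. \<Sum>u\<in>C. \<Prod>a\<in>UNIV. x a ^ rcount a (perm_word n \<sigma> u) w) / fact n"
    unfolding jac_av_def P_def[symmetric] using jac_eq by simp
  also have "\<dots> = (\<Sum>u\<in>C. (\<Sum>\<sigma>\<in>P. \<Prod>a\<in>UNIV. x a ^ rcount a (perm_word n \<sigma> u) w) / fact n)"
    by (simp add: sum.swap[of _ P C] sum_divide_distrib)
  also have "\<dots> = (\<Sum>u\<in>C. F (ev u))"
  proof (intro sum.cong refl)
    fix u assume "u \<in> C"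
    then have u: "length u = n" using Csub by auto
    show "(\<Sum>\<sigma>\<in>P. \<Prod>a\<in>UNIV. x a ^ rcount a (perm_word n \<sigma> u) w) / fact n = F (ev u)"
      unfolding P_def F_def ev_def using per_u[OF u w, of x] by simp
  qed
  also have "\<dots> = (\<Sum>L\<in>compositions n. \<Sum>u\<in>{u. u \<in> C \<and> ev u = L}. F (ev u))"
  proof (rule sum.group[symmetric, OF finC])
    show "finite (compositions n :: ('r \<Rightarrow> nat) set)" unfolding compositions_def by (rule finite_sum_eq)
    show "ev ` C \<subseteq> compositions n"
    proof
      fix L assume "L \<in> ev ` C"
      then obtain u where "u \<in> C" "L = ev u" by auto
      then have u: "length u = n" and L: "L = ev u" using Csub by auto
      have "(\<Sum>a\<in>UNIV. L a) = n"
        unfolding L ev_def using sum_cnt[of n "\<lambda>i. u ! i"] cnt_ell[OF u] by simp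
      then show "L \<in> compositions n" unfolding compositions_def by simp
    qed
  qed
  also have "\<dots> = (\<Sum>L\<in>compositions n. real (weight_count C L) * F L)"
  proof (intro sum.cong refl)
    fix L :: "'r \<Rightarrow> nat"
    have e1: "(\<Sum>u\<in>{u. u \<in> C \<and> ev u = L}. F (ev u)) = (\<Sum>u\<in>{u. u \<in> C \<and> ev u = L}. F L)"
      by (intro sum.cong) auto
    have e2: "{u. u \<in> C \<and> ev u = L} = {u\<in>C. \<forall>a. ell a u = L a}"
      unfolding ev_def by (auto simp: fun_eq_iff)
    show "(\<Sum>u\<in>{u. u \<in> C \<and> ev u = L}. F (ev u)) = real (weight_count C L) * F L"
      unfolding e1 unfolding e2 weight_count_def by simp
  qed
  also have "\<dots> = (\<Sum>L\<in>compositions n.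
      \<Sum>R\<in>{R\<in>jacobi_compositions n. (\<forall>c. L c = (\<Sum>b\<in>UNIV. R (c, b))) \<and>
                                      (\<forall>c. ell c w = (\<Sum>b\<in>UNIV. R (b, c)))}.
        real (weight_count C L) *
        (\<Prod>b\<in>UNIV. real (multinomial (ell b w) (\<lambda>c. R (c, b)))) / real (multinomial n L) *
        (\<Prod>a\<in>UNIV. x a ^ R a))"
    unfolding F_def sum_distrib_left by (intro sum.cong refl) simp
  finally show ?thesis .
qed

end
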